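(* For every integer $k \ge 1$ and every $\epsilon \in (0,1)$, the non-oblivious local search algorithm described in the context, run on any $k$-exchange system $\mathcal{I}$ over a ground set of size $n$ and any nonnegative monotone submodular $f$, terminates after $O(\epsilon^{-2}k^2 n^{k^2+4})$ time (counting oracle calls and arithmetic operations, for fixed $k$ in the $\epsilon$-dependence) and returns $S \in \mathcal{I}$ with $f(O) \le \bigl(\frac{k+3}{2} + \epsilon\bigr) f(S)$ for every $O \in \mathcal{I}$.
   Context: A $k$-exchange system is a nonempty downward-closed family $\mathcal{I} \subseteq 2^{\mathcal{G}}$ such that for all $A, B \in \mathcal{I}$ there is a collection $\{Y_e \subseteq B \setminus A : e \in A \setminus B\}$ with (K1) $|Y_e| \le k$; (K2) every $x \in B \setminus A$ lies in at most $k$ of the $Y_e$; (K3) for every $C \subseteq A \setminus B$, $(B \setminus \bigcup_{e \in C} Y_e) \cup C \in \mathcal{I}$. $f : 2^{\mathcal{G}} \to \mathbb{R}_{\ge 0}$ is monotone submodular, accessed via a value oracle; $\mathcal{I}$ via a membership oracle; all singletons are assumed independent. Algorithm. Let $S_{\mathrm{init}} = \{e^*\}$ with $e^* \in \arg\max_e f(\{e\})$, $\delta = (1 + \frac{k+3}{2\epsilon})^{-1}$, $\alpha = f(S_{\mathrm{init}})\delta/n$, $S \leftarrow S_{\mathrm{init}}$, $\prec$ an arbitrary total order on $\mathcal{G}$. Repeat: compute weights $w$ on $S$: with $S = \{s_1 \prec \dots \prec s_m\}$, $S_i = \{s_1,\dots,s_i\}$, $w(s_i) = \lfloor (f(S_{i-1}\cup\{s_i\})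 - f(S_{i-1}))/\alpha\rfloor\alpha$. Scan all $k$-replacements $(A,B)$ (pairs with $B \subseteq S$, $A \subseteq \mathcal{G}\setminus(S\setminus B)$, $|A|\le k$, $|B| \le k^2-k+1$, $(S\setminus B)\cup A \in \mathcal{I}$); for each, with $A = \{a_1 \prec\dots\prec a_r\}$, $A_i=\{a_1,\dots,a_i\}$, compute $w_{(A,B)}(a_i) = \lfloor (f((S\setminus B)\cup A_{i-1}\cup\{a_i\}) - f((S\setminus B)\cup A_{i-1}))/\alpha\rfloor\alpha$. If $\sum_{a\in A} w_{(A,B)}(a)^2 > \sum_{b \in B} w(b)^2$, replace $\prec$ by an order in which all elements of $S\setminus B$ precede those of $A$ and which otherwise keeps the relative order of $\prec$ on $(S \setminus B)\cup A$, set $S \leftarrow (S\setminus B)\cup A$, and start a new iteration. If no such $(A,B)$ exists, return $S$. *)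

theory Defs
  imports Complex_Main
begin

definition k_exchange_system :: "'a set \<Rightarrow> 'a set set \<Rightarrow> nat \<Rightarrow> bool" where
  "k_exchange_system G I k \<longleftrightarrow>
     I \<noteq> {} \<and> I \<subseteq> Pow G \<and>
     (\<forall>A\<in>I. \<forall>B. B \<subseteq> A \<longrightarrow> B \<in> I) \<and>
     (\<forall>A\<in>I. \<forall>B\<in>I. \<exists>Y :: 'a \<Rightarrow> 'a set.
        (\<forall>e\<in>A - B. Y e \<subseteq> B - A \<and> card (Y e) \<le> k) \<and>
        (\<forall>x\<in>B - A. card {e \<in> A - B. x \<in> Y e} \<le> k) \<and>
        (\<forall>C. C \<subseteq> A - B \<longrightarrow> (B - (\<Union>e\<in>C. Y e)) \<union> C \<in> I))"

definition monotone_submodular :: "'a set \<Rightarrow> ('a set \<Rightarrow> real) \<Rightarrow> bool" where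
  "monotone_submodular G f \<longleftrightarrow>
     (\<forall>X. X \<subseteq> G \<longrightarrow> f X \<ge> 0) \<and>
     (\<forall>X Y. X \<subseteq> Y \<and> Y \<subseteq> G \<longrightarrow> f X \<le> f Y) \<and>
     (\<forall>X Y. X \<subseteq> G \<and> Y \<subseteq> G \<longrightarrow> f (X \<union> Y) + f (X \<inter> Y) \<le> f X + f Y)"

text \<open>A total order on the ground set G is represented by a list enumerating G
  without repetitions; x precedes y iff x occurs strictly earlier.\<close>

definition is_order :: "'a set \<Rightarrow> 'a list \<Rightarrow> bool" where
  "is_order G xs \<longleftrightarrow> distinct xs \<and> set xs = G"

definition before :: "'a list \<Rightarrow> 'a \<Rightarrow> 'a \<Rightarrow> bool" where
  "before xs x y \<longleftrightarrow> (\<exists>i j. i < j \<and> j < length xs \<and> xs ! i = x \<and> xs ! j = y)"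

definition rnd :: "real \<Rightarrow> real \<Rightarrow> real" where
  "rnd \<alpha> v = of_int \<lfloor>v / \<alpha>\<rfloor> * \<alpha>"

fun wlist :: "('a set \<Rightarrow> real) \<Rightarrow> real \<Rightarrow> 'a set \<Rightarrow> 'a list \<Rightarrow> ('a \<times> real) list" where
  "wlist f \<alpha> T [] = []"
| "wlist f \<alpha> T (x # xs) = (x, rnd \<alpha> (f (insert x T) - f T)) # wlist f \<alpha> (insert x T) xs"

definition sqsum :: "('a \<times> real) list \<Rightarrow> 'a set \<Rightarrow> real" where
  "sqsum ws B = sum_list (map (\<lambda>(x, v). v ^ 2) (filter (\<lambda>(x, v). x \<in> B) ws))"

text \<open>Weights w on S (w.r.t. the current order xs): sum of w(b)^2 over b in B.\<close>
definition loss :: "('a set \<Rightarrow> real) \<Rightarrow> real \<Rightarrow> 'a set \<Rightarrow> 'a list \<Rightarrow> 'a set \<Rightarrow> real" where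
  "loss f \<alpha> S xs B = sqsum (wlist f \<alpha> {} (filter (\<lambda>x. x \<in> S) xs)) B"

text \<open>Weights w_(A,B) on A: sum of w_(A,B)(a)^2 over a in A.\<close>
definition gain :: "('a set \<Rightarrow> real) \<Rightarrow> real \<Rightarrow> 'a set \<Rightarrow> 'a list \<Rightarrow> 'a set \<Rightarrow> 'a set \<Rightarrow> real" where
  "gain f \<alpha> S xs A B = sqsum (wlist f \<alpha> (S - B) (filter (\<lambda>x. x \<in> A) xs)) A"

definition k_replacement :: "'a set \<Rightarrow> 'a set set \<Rightarrow> nat \<Rightarrow> 'a set \<Rightarrow> 'a set \<Rightarrow> 'a set \<Rightarrow> bool" where
  "k_replacement G I k S A B \<longleftrightarrow>
     B \<subseteq> S \<and> A \<subseteq> G - (S - B) \<and> card A \<le> k \<and> card B \<le> k ^ 2 - k + 1 \<and>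
     (S - B) \<union> A \<in> I"

definition reorder_ok :: "'a list \<Rightarrow> 'a list \<Rightarrow> 'a set \<Rightarrow> 'a set \<Rightarrow> bool" where
  "reorder_ok xs xs' P A \<longleftrightarrow>
     distinct xs' \<and> set xs' = set xs \<and>
     (\<forall>x\<in>P. \<forall>y\<in>A. before xs' x y) \<and>
     (\<forall>x\<in>P. \<forall>y\<in>P. before xs' x y \<longleftrightarrow> before xs x y) \<and>
     (\<forall>x\<in>A. \<forall>y\<in>A. before xs' x y \<longleftrightarrow> before xs x y)"

definition ls_step :: "'a set \<Rightarrow> 'a set set \<Rightarrow> ('a set \<Rightarrow> real) \<Rightarrow> nat \<Rightarrow> real \<Rightarrow>
    'a set \<times> 'a list \<Rightarrow> 'a set \<times> 'a list \<Rightarrow> bool" where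
  "ls_step G I f k \<alpha> st st' \<longleftrightarrow>
     (\<exists>A B. k_replacement G I k (fst st) A B \<and>
        gain f \<alpha> (fst st) (snd st) A B > loss f \<alpha> (fst st) (snd st) B \<and>
        fst st' = (fst st - B) \<union> A \<and>
        reorder_ok (snd st) (snd st') (fst st - B) A)"

definition ls_delta :: "nat \<Rightarrow> real \<Rightarrow> real" where
  "ls_delta k \<epsilon> = 1 / (1 + (real k + 3) / (2 * \<epsilon>))"

definition ls_alpha :: "'a set \<Rightarrow> ('a set \<Rightarrow> real) \<Rightarrow> nat \<Rightarrow> real \<Rightarrow> 'a \<Rightarrow> real" where
  "ls_alpha G f k \<epsilon> e0 = f {e0} * ls_delta k \<epsilon> / real (card G)"

text \<open>Candidate pairs scanned in one iteration (membership is checked for each).\<close>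
definition candidates :: "'a set \<Rightarrow> nat \<Rightarrow> 'a set \<Rightarrow> ('a set \<times> 'a set) set" where
  "candidates G k S = {(A, B). B \<subseteq> S \<and> A \<subseteq> G - (S - B) \<and> card A \<le> k \<and> card B \<le> k ^ 2 - k + 1}"

text \<open>Upper bound on oracle calls plus arithmetic operations of one full iteration:
  reordering (|G|), computing the weights on S (|S|+1 value calls), and for each
  candidate pair one membership call, |A|+1 value calls and O(|A|+|B|) arithmetic.
  An iteration is charged a full scan even if it stops at the first improvement.\<close>
definition iter_cost :: "'a set \<Rightarrow> nat \<Rightarrow> 'a set \<Rightarrow> nat" where
  "iter_cost G k S = card G + card S + 1 +
     (\<Sum>(A, B)\<in>candidates G k S. 2 * (card A + card B + 2))"

end

theory Submission
  imports Defs
begin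

lemma before_Nil[simp]: "\<not> before [] x y"
  by (auto simp: before_def)

lemma before_Cons: "before (z#L) y x \<longleftrightarrow> (y = z \<and> x \<in> set L) \<or> before L y x"
proof
  assume "before (z#L) y x"
  then obtain i j where ij: "i < j" "j < length (z#L)" "(z#L)!i = y" "(z#L)!j = x"
    by (auto simp: before_def)
  show "(y = z \<and> x \<in> set L) \<or> before L y x"
  proof (cases i)
    case 0
    then show ?thesis using ij by (cases j) auto
  next
    case (Suc i')
    then obtain j' where "j = Suc j'" using ij by (cases j) auto
    then show ?thesis using ij Suc unfolding before_def by auto
  qed
next
  assume "(y = z \<and> x \<in> set L) \<or> before L y x"
  then show "before (z#L) y x"
  proof
    assume "y = z \<and> x \<in> set L"
    then obtain j where "j < length L" "L!j = x" "y = z" by (auto simp: in_set_conv_nth)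
    then show ?thesis unfolding before_def
      by (intro exI[of _ 0] exI[of _ "Suc j"]) auto
  next
    assume "before L y x"
    then obtain i j where "i < j" "j < length L" "L!i = y" "L!j = x" by (auto simp: before_def)
    then show ?thesis unfolding before_def
      by (intro exI[of _ "Suc i"] exI[of _ "Suc j"]) auto
  qed
qed

lemma before_set: "before L y x \<Longrightarrow> y \<in> set L \<and> x \<in> set L"
  by (auto simp: before_def)

lemma before_append:
  "before (L1 @ L2) y x \<longleftrightarrow> before L1 y x \<or> (y \<in> set L1 \<and> x \<in> set L2) \<or> before L2 y x"
  by (induction L1) (auto simp: before_Cons)

lemma before_filter: "before (filter P L) y x \<longleftrightarrow> before L y x \<and> P y \<and> P x"
  by (induction L) (auto simp: before_Cons dest: before_set)

lemma before_asym: "distinct L \<Longrightarrow> before L y x \<Longrightarrow> \<not> before L x y"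
  by (induction L) (auto simp: before_Cons dest: before_set)

definition marg :: "('a set \<Rightarrow> real) \<Rightarrow> 'a set \<Rightarrow> 'a \<Rightarrow> real" where
  "marg f X x = f (insert x X) - f X"

definition pre :: "'a list \<Rightarrow> 'a \<Rightarrow> 'a set" where
  "pre L x = {y. before L y x}"

lemma pre_Cons_head: "distinct (z#L) \<Longrightarrow> pre (z#L) z = {}"
  by (auto simp: pre_def before_Cons dest: before_set)

lemma pre_Cons_tail: "x \<in> set L \<Longrightarrow> pre (z#L) x = insert z (pre L x)"
  by (auto simp: pre_def before_Cons)

lemma sqsum_Nil[simp]: "sqsum [] B = 0" by (simp add: sqsum_def)

lemma sqsum_Cons: "sqsum ((x,v)#ws) B = (if x \<in> B then v^2 else 0) + sqsum ws B"
  by (simp add: sqsum_def)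

lemma wlist_sqsum:
  "distinct L \<Longrightarrow> sqsum (wlist f \<alpha> T L) B = (\<Sum>x\<in>set L \<inter> B. (rnd \<alpha> (marg f (T \<union> pre L x) x))^2)"
proof (induction L arbitrary: T)
  case Nil
  then show ?case by simp
next
  case (Cons z L)
  have d: "distinct L" "z \<notin> set L" using Cons.prems by auto
  have IH: "sqsum (wlist f \<alpha> (insert z T) L) B = (\<Sum>x\<in>set L \<inter> B. (rnd \<alpha> (marg f (insert z T \<union> pre L x) x))^2)"
    using Cons.IH d by blast
  have eq: "(\<Sum>x\<in>set L \<inter> B. (rnd \<alpha> (marg f (insert z T \<union> pre L x) x))^2)
      = (\<Sum>x\<in>set L \<inter> B. (rnd \<alpha> (marg f (T \<union> pre (z#L) x) x))^2)"
    by (rule sum.cong) (auto simp: pre_Cons_tail)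
  have hd: "marg f (T \<union> pre (z#L) z) z = f (insert z T) - f T"
    using pre_Cons_head[OF Cons.prems] by (simp add: marg_def)
  show ?case
  proof (cases "z \<in> B")
    case True
    have "set (z#L) \<inter> B = insert z (set L \<inter> B)" using True by auto
    then show ?thesis using True d IH eq hd by (simp add: sqsum_Cons)
  next
    case False
    have "set (z#L) \<inter> B = set L \<inter> B" using False by auto
    then show ?thesis using False d IH eq hd by (simp add: sqsum_Cons)
  qed
qed

lemma marg_telescope:
  "distinct L \<Longrightarrow> (\<Sum>x\<in>set L. marg f (T \<union> pre L x) x) = f (T \<union> set L) - f T"
proof (induction L arbitrary: T)
  case Nil
  then show ?case by simp
next
  case (Cons z L)
  have d: "distinct L" "z \<notin> set L" using Cons.prems by auto
  have eq: "(\<Sum>x\<in>set L. marg f (T \<union> pre (z#L) x) x) = (\<Sum>x\<in>set L. marg f (insert z T \<union> pre L x) x)"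
    by (rule sum.cong) (auto simp: pre_Cons_tail)
  have hd: "marg f (T \<union> pre (z#L) z) z = f (insert z T) - f T"
    using pre_Cons_head[OF Cons.prems] by (simp add: marg_def)
  show ?case using d eq hd Cons.IH[OF d(1), of "insert z T"] by simp
qed

lemma pre_filter: "P x \<Longrightarrow> pre (filter P L) x = {y \<in> pre L x. P y}"
  by (auto simp: pre_def before_filter)

lemma rnd_zero[simp]: "rnd 0 v = 0" by (simp add: rnd_def)

lemma rnd_nonneg: "0 \<le> \<alpha> \<Longrightarrow> 0 \<le> v \<Longrightarrow> 0 \<le> rnd \<alpha> v"
  by (cases "\<alpha> = 0") (auto simp: rnd_def)

lemma rnd_le: "0 \<le> \<alpha> \<Longrightarrow> 0 \<le> v \<Longrightarrow> rnd \<alpha> v \<le> v"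
proof (cases "\<alpha> = 0")
  case False
  assume a: "0 \<le> \<alpha>"
  then have "\<alpha> > 0" using False by simp
  have "of_int \<lfloor>v / \<alpha>\<rfloor> \<le> v / \<alpha>" by simp
  then have "of_int \<lfloor>v / \<alpha>\<rfloor> * \<alpha> \<le> v / \<alpha> * \<alpha>" by (rule mult_right_mono) (use \<open>\<alpha> > 0\<close> in simp)
  then show ?thesis using \<open>\<alpha> > 0\<close> by (simp add: rnd_def)
qed simp

lemma rnd_ge: "0 < \<alpha> \<Longrightarrow> v - \<alpha> \<le> rnd \<alpha> v"
proof -
  assume a: "0 < \<alpha>"
  have "v / \<alpha> - 1 \<le> of_int \<lfloor>v / \<alpha>\<rfloor>" by linarith
  then have "(v / \<alpha> - 1) * \<alpha> \<le> of_int \<lfloor>v / \<alpha>\<rfloor> * \<alpha>" by (rule mult_right_mono) (use a in simp)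
  then show ?thesis using a by (simp add: rnd_def algebra_simps)
qed

lemma rnd_mono: "0 \<le> \<alpha> \<Longrightarrow> v \<le> v' \<Longrightarrow> rnd \<alpha> v \<le> rnd \<alpha> v'"
proof (cases "\<alpha> = 0")
  case False
  assume a: "0 \<le> \<alpha>" "v \<le> v'"
  then have "\<alpha> > 0" using False by simp
  then have "v / \<alpha> \<le> v' / \<alpha>" using a by (simp add: divide_right_mono)
  then have "\<lfloor>v / \<alpha>\<rfloor> \<le> \<lfloor>v' / \<alpha>\<rfloor>" by (rule floor_mono)
  then show ?thesis using \<open>\<alpha> > 0\<close> by (simp add: rnd_def)
qed simp

lemma rnd_sq: "(rnd \<alpha> v)^2 = \<alpha>^2 * of_int (\<lfloor>v / \<alpha>\<rfloor>^2)"
  by (simp add: rnd_def power_mult_distrib)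

lemma sum_rnd_sq: "(\<Sum>x\<in>A. (rnd \<alpha> (g x))^2) = \<alpha>^2 * of_int (\<Sum>x\<in>A. \<lfloor>g x / \<alpha>\<rfloor>^2)"
  by (simp add: rnd_sq sum_distrib_left)

lemma marg_nonneg: "monotone_submodular G f \<Longrightarrow> X \<subseteq> G \<Longrightarrow> x \<in> G \<Longrightarrow> 0 \<le> marg f X x"
proof -
  assume a: "monotone_submodular G f" "X \<subseteq> G" "x \<in> G"
  have "f X \<le> f (insert x X)" using a unfolding monotone_submodular_def
    by (metis insert_subset subset_insertI)
  then show ?thesis by (simp add: marg_def)
qed

lemma marg_antimono:
  assumes "monotone_submodular G f" "X \<subseteq> Y" "Y \<subseteq> G" "x \<in> G" "x \<notin> Y"
  shows "marg f Y x \<le> marg f X x"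
proof -
  have "\<forall>X Y. X \<subseteq> G \<and> Y \<subseteq> G \<longrightarrow> f (X \<union> Y) + f (X \<inter> Y) \<le> f X + f Y"
    using assms(1) unfolding monotone_submodular_def by blast
  moreover have "insert x X \<subseteq> G" using assms by auto
  ultimately have "f (insert x X \<union> Y) + f (insert x X \<inter> Y) \<le> f (insert x X) + f Y"
    using assms(3) by blast
  moreover have "insert x X \<union> Y = insert x Y" "insert x X \<inter> Y = X" using assms by auto
  ultimately show ?thesis by (simp add: marg_def)
qed

lemma marg_le_single:
  assumes "monotone_submodular G f" "X \<subseteq> G" "x \<in> G" "x \<notin> X"
  shows "marg f X x \<le> f {x} - f {}"
  using marg_antimono[OF assms(1) _ assms(2-4), of "{}"] by (simp add: marg_def)

lemma sum_UN_le_nonneg: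
  fixes g :: "'b \<Rightarrow> real"
  assumes "finite J" "\<And>j. j \<in> J \<Longrightarrow> finite (A j)" "\<And>x. 0 \<le> g x"
  shows "sum g (\<Union>j\<in>J. A j) \<le> (\<Sum>j\<in>J. sum g (A j))"
  using assms(1,2)
proof (induction J rule: finite_induct)
  case empty then show ?case by simp
next
  case (insert j J)
  have f: "finite (\<Union>j\<in>J. A j)" "finite (A j)" using insert by auto
  have "sum g (\<Union>i\<in>insert j J. A i) = sum g (A j \<union> (\<Union>i\<in>J. A i))" by simp
  also have "\<dots> \<le> sum g (A j) + sum g (\<Union>i\<in>J. A i)"
  proof -
    have "0 \<le> sum g (A j \<inter> (\<Union>i\<in>J. A i))" by (rule sum_nonneg) (use assms(3) in auto)
    then show ?thesis using sum_Un[OF f(2) f(1), of g] by linarith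
  qed
  also have "\<dots> \<le> sum g (A j) + (\<Sum>i\<in>J. sum g (A i))" using insert by simp
  finally show ?case using insert by simp
qed

definition ww :: "('a set \<Rightarrow> real) \<Rightarrow> real \<Rightarrow> 'a set \<Rightarrow> 'a list \<Rightarrow> 'a \<Rightarrow> real" where
  "ww f \<alpha> S xs x = rnd \<alpha> (marg f {y\<in>S. before xs y x} x)"

lemma loss_eq:
  assumes "distinct xs" "S \<subseteq> set xs"
  shows "loss f \<alpha> S xs B = (\<Sum>x\<in>S \<inter> B. (ww f \<alpha> S xs x)^2)"
proof -
  have s: "set (filter (\<lambda>x. x \<in> S) xs) = S" using assms by auto
  have e: "\<And>x. x \<in> S \<Longrightarrow> {y. before (filter (\<lambda>x. x\<in>S) xs) y x} = {y\<in>S. before xs y x}"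
    by (auto simp: before_filter)
  show ?thesis unfolding loss_def
    apply (subst wlist_sqsum) using assms apply simp
    apply (simp only: s)
    apply (rule sum.cong, simp)
    using e by (simp add: ww_def pre_def)
qed

lemma gain_eq:
  assumes "distinct xs" "A \<subseteq> set xs"
  shows "gain f \<alpha> S xs A B = (\<Sum>a\<in>A. (rnd \<alpha> (marg f ((S - B) \<union> {y\<in>A. before xs y a}) a))^2)"
proof -
  have s: "set (filter (\<lambda>x. x \<in> A) xs) = A" using assms by auto
  have s2: "set (filter (\<lambda>x. x \<in> A) xs) \<inter> A = A" using assms by auto
  have e: "\<And>x. x \<in> A \<Longrightarrow> {y. before (filter (\<lambda>x. x\<in>A) xs) y x} = {y\<in>A. before xs y x}"
    by (auto simp: before_filter)
  show ?thesis unfolding gain_def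
    apply (subst wlist_sqsum) using assms apply simp
    apply (simp only: s2)
    apply (rule sum.cong, simp)
    using e by (simp add: pre_def)
qed

lemma ww_nonneg:
  assumes "monotone_submodular G f" "0 \<le> \<alpha>" "S \<subseteq> G" "x \<in> G"
  shows "0 \<le> ww f \<alpha> S xs x"
  unfolding ww_def using assms by (intro rnd_nonneg marg_nonneg[of G]) auto

lemma ww_le:
  assumes "monotone_submodular G f" "0 \<le> \<alpha>" "S \<subseteq> G" "x \<in> S" "distinct xs"
  shows "ww f \<alpha> S xs x \<le> f {x} - f {}"
proof -
  have x: "x \<notin> {y\<in>S. before xs y x}" using before_asym[OF assms(5)] by auto
  have "ww f \<alpha> S xs x \<le> marg f {y\<in>S. before xs y x} x"
    unfolding ww_def using assms by (intro rnd_le marg_nonneg[of G]) auto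
  also have "\<dots> \<le> f {x} - f {}" using assms x by (intro marg_le_single[of G]) auto
  finally show ?thesis .
qed

lemma step_pot:
  assumes ms: "monotone_submodular G f" and al: "0 \<le> \<alpha>" and SI: "S \<in> I" and IG: "I \<subseteq> Pow G"
    and d: "distinct xs" and sx: "set xs = G"
    and st: "ls_step G I f k \<alpha> (S, xs) (S', xs')"
  shows "S' \<in> I \<and> distinct xs' \<and> set xs' = G \<and> 0 < \<alpha> \<and>
         loss f \<alpha> S xs S + \<alpha>^2 \<le> loss f \<alpha> S' xs' S'"
proof -
  obtain A B where kr: "k_replacement G I k S A B"
    and gl: "gain f \<alpha> S xs A B > loss f \<alpha> S xs B"
    and S': "S' = (S - B) \<union> A" and ro: "reorder_ok xs xs' (S - B) A"
    using st unfolding ls_step_def by auto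
  define P where "P = S - B"
  have SG: "S \<subseteq> G" using SI IG by auto
  have BS: "B \<subseteq> S" and AG: "A \<subseteq> G - P" and S'I: "S' \<in> I"
    using kr S' unfolding k_replacement_def P_def by auto
  have PA: "P \<inter> A = {}" using AG by auto
  have d': "distinct xs'" and sx': "set xs' = G" using ro sx unfolding reorder_ok_def by auto
  have ro1: "\<And>x y. x \<in> P \<Longrightarrow> y \<in> A \<Longrightarrow> before xs' x y"
    and ro2: "\<And>x y. x \<in> P \<Longrightarrow> y \<in> P \<Longrightarrow> before xs' x y \<longleftrightarrow> before xs x y"
    and ro3: "\<And>x y. x \<in> A \<Longrightarrow> y \<in> A \<Longrightarrow> before xs' x y \<longleftrightarrow> before xs x y"
    using ro unfolding reorder_ok_def P_def by auto
  have finG: "finite G" using sx by auto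
  have finA: "finite A" "finite P" "finite B" using AG SG BS finG P_def by (auto intro: finite_subset)
  have S'G: "S' \<subseteq> G" using S'I IG by auto
  have gain_e: "gain f \<alpha> S xs A B = (\<Sum>a\<in>A. (rnd \<alpha> (marg f (P \<union> {y\<in>A. before xs y a}) a))^2)"
    unfolding P_def by (rule gain_eq[OF d]) (use AG sx in auto)
  have loss_e: "loss f \<alpha> S xs B = (\<Sum>x\<in>B. (ww f \<alpha> S xs x)^2)"
    using loss_eq[OF d, of S] SG sx BS by (simp add: Int_absorb1)
  have apos: "0 < \<alpha>"
  proof (rule ccontr)
    assume "\<not> 0 < \<alpha>" then have "\<alpha> = 0" using al by simp
    then show False using gl gain_e loss_e by (simp add: ww_def)
  qed
  define Zg where "Zg = (\<Sum>a\<in>A. \<lfloor>marg f (P \<union> {y\<in>A. before xs y a}) a / \<alpha>\<rfloor>^2)"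
  define Zl where "Zl = (\<Sum>x\<in>B. \<lfloor>marg f {y\<in>S. before xs y x} x / \<alpha>\<rfloor>^2)"
  have g2: "gain f \<alpha> S xs A B = \<alpha>^2 * of_int Zg" unfolding gain_e Zg_def by (rule sum_rnd_sq)
  have l2: "loss f \<alpha> S xs B = \<alpha>^2 * of_int Zl" unfolding loss_e Zl_def ww_def by (rule sum_rnd_sq)
  have "Zl < Zg" using gl g2 l2 apos by (simp add: mult_less_cancel_left)
  then have "of_int Zl + 1 \<le> (of_int Zg :: real)" by linarith
  then have "\<alpha>^2 * (of_int Zl + 1) \<le> \<alpha>^2 * of_int Zg" by (rule mult_left_mono) simp
  then have gl2: "loss f \<alpha> S xs B + \<alpha>^2 \<le> gain f \<alpha> S xs A B"
    using g2 l2 by (simp add: algebra_simps)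
  have newA: "\<And>x. x \<in> A \<Longrightarrow> {y\<in>S'. before xs' y x} = P \<union> {y\<in>A. before xs y x}"
    using ro1 ro3 PA unfolding S' P_def[symmetric] by auto
  have newP: "{y\<in>S'. before xs' y x} = {y\<in>P. before xs y x}" if xP: "x \<in> P" for x
  proof (rule set_eqI)
    fix y
    show "y \<in> {y\<in>S'. before xs' y x} \<longleftrightarrow> y \<in> {y\<in>P. before xs y x}"
    proof (cases "y \<in> A")
      case True
      then have "before xs' x y" using ro1 xP by blast
      then have "\<not> before xs' y x" using before_asym[OF d'] by blast
      then show ?thesis using True PA by auto
    next
      case False
      then show ?thesis using ro2[OF _ xP, of y] unfolding S' P_def[symmetric] by auto
    qed
  qed
  have pot': "loss f \<alpha> S' xs' S' = (\<Sum>x\<in>P. (ww f \<alpha> S' xs' x)^2) + (\<Sum>x\<in>A. (ww f \<alpha> S' xs' x)^2)"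
    using loss_eq[OF d', of S'] S'G sx' PA finA unfolding S' P_def[symmetric]
    by (simp add: sum.union_disjoint)
  have potA: "(\<Sum>x\<in>A. (ww f \<alpha> S' xs' x)^2) = gain f \<alpha> S xs A B"
    unfolding gain_e by (rule sum.cong) (auto simp: ww_def newA)
  have potP: "(\<Sum>x\<in>P. (ww f \<alpha> S xs x)^2) \<le> (\<Sum>x\<in>P. (ww f \<alpha> S' xs' x)^2)"
  proof (rule sum_mono)
    fix x assume xP: "x \<in> P"
    have xG: "x \<in> G" using xP SG P_def by auto
    have "ww f \<alpha> S xs x \<le> ww f \<alpha> S' xs' x"
      unfolding ww_def newP[OF xP]
    proof (rule rnd_mono[OF al], rule marg_antimono[OF ms _ _ xG])
      show "{y \<in> P. before xs y x} \<subseteq> {y \<in> S. before xs y x}" using P_def by auto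
      show "{y \<in> S. before xs y x} \<subseteq> G" using SG by auto
      show "x \<notin> {y \<in> S. before xs y x}" using before_asym[OF d] by auto
    qed
    moreover have "0 \<le> ww f \<alpha> S xs x" using ww_nonneg[OF ms al SG xG] .
    ultimately show "(ww f \<alpha> S xs x)^2 \<le> (ww f \<alpha> S' xs' x)^2" by (simp add: power_mono)
  qed
  have pot: "loss f \<alpha> S xs S = (\<Sum>x\<in>P. (ww f \<alpha> S xs x)^2) + loss f \<alpha> S xs B"
  proof -
    have "S = P \<union> B" "P \<inter> B = {}" using BS P_def by auto
    then show ?thesis using loss_eq[OF d, of S] SG sx loss_e finA
      by (simp add: sum.union_disjoint)
  qed
  show ?thesis using S'I d' sx' apos pot pot' potA potP gl2 by linarith
qed

lemma per_center:
  fixes u Wf :: "'b \<Rightarrow> real" and wb :: real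
  assumes fin: "finite T" and wb: "0 \<le> wb" and u: "\<And>a. a \<in> T \<Longrightarrow> 0 \<le> u a"
    and W: "\<And>a. a \<in> T \<Longrightarrow> 0 \<le> Wf a"
    and Q: "(\<Sum>a\<in>T. (u a)^2) \<le> wb^2 + (\<Sum>a\<in>T. wb * (Wf a - wb))"
  shows "2 * (\<Sum>a\<in>T. u a) \<le> wb + (\<Sum>a\<in>T. Wf a)"
proof (cases "wb = 0")
  case True
  then have "(\<Sum>a\<in>T. (u a)^2) \<le> 0" using Q by simp
  then have "\<forall>a\<in>T. (u a)^2 = 0"
    using sum_nonneg_eq_0_iff[OF fin, of "\<lambda>a. (u a)^2"] by (simp add: antisym sum_nonneg)
  then have "(\<Sum>a\<in>T. u a) = 0" by simp
  moreover have "0 \<le> (\<Sum>a\<in>T. Wf a)" using W by (simp add: sum_nonneg)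
  ultimately show ?thesis using True by simp
next
  case False
  then have wp: "0 < wb" using wb by simp
  have "(\<Sum>a\<in>T. 2 * wb * u a - wb^2) \<le> (\<Sum>a\<in>T. (u a)^2)"
  proof (rule sum_mono)
    fix a show "2 * wb * u a - wb^2 \<le> (u a)^2"
      using zero_le_power2[of "u a - wb"] by (simp add: power2_diff algebra_simps)
  qed
  also have "\<dots> \<le> wb^2 + (\<Sum>a\<in>T. wb * (Wf a - wb))" by (rule Q)
  finally have fin1: "(\<Sum>a\<in>T. 2 * wb * u a - wb^2) \<le> wb^2 + (\<Sum>a\<in>T. wb * (Wf a - wb))" .
  have e1: "(\<Sum>a\<in>T. 2 * wb * u a - wb^2) = 2 * wb * (\<Sum>a\<in>T. u a) - card T * wb^2"
    by (simp add: sum_subtractf sum_distrib_left mult.assoc)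
  have e2: "(\<Sum>a\<in>T. wb * (Wf a - wb)) = wb * (\<Sum>a\<in>T. Wf a) - card T * wb^2"
    by (simp add: sum_subtractf sum_distrib_left right_diff_distrib power2_eq_square)
  have "2 * wb * (\<Sum>a\<in>T. u a) \<le> wb^2 + wb * (\<Sum>a\<in>T. Wf a)" using fin1 e1 e2 by linarith
  then have "wb * (2 * (\<Sum>a\<in>T. u a)) \<le> wb * (wb + (\<Sum>a\<in>T. Wf a))"
    by (simp add: algebra_simps power2_eq_square)
  then show ?thesis using wp by (simp add: mult_le_cancel_left_pos)
qed

lemma approx_local:
  fixes f :: "'a set \<Rightarrow> real"
  assumes k1: "k \<ge> 1" and kex: "k_exchange_system G I k" and ms: "monotone_submodular G f"
    and al: "0 \<le> \<alpha>" and SI: "S \<in> I" and d: "distinct xs" and sx: "set xs = G"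
    and lopt: "\<And>A B. k_replacement G I k S A B \<Longrightarrow> gain f \<alpha> S xs A B \<le> loss f \<alpha> S xs B"
    and OI: "Opt \<in> I"
    and az: "\<alpha> = 0 \<Longrightarrow> (\<forall>e\<in>G. f {e} \<le> f {})"
  shows "f Opt \<le> f S + (real k + 1) / 2 * (f S - f {}) + real (card G) * \<alpha>"
proof -
  have IG: "I \<subseteq> Pow G" using kex unfolding k_exchange_system_def by auto
  have finG: "finite G" using sx by auto
  have SG: "S \<subseteq> G" and OG: "Opt \<subseteq> G" using SI OI IG by auto
  have finS: "finite S" and finO: "finite Opt" using SG OG finG by (auto intro: finite_subset)
  define D where "D = Opt - S"
  have finD: "finite D" and DG: "D \<subseteq> G" using finO OG D_def by auto
  have exall: "\<forall>A\<in>I. \<forall>B\<in>I. \<exists>Y :: 'a \<Rightarrow> 'a set.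
        (\<forall>e\<in>A - B. Y e \<subseteq> B - A \<and> card (Y e) \<le> k) \<and>
        (\<forall>x\<in>B - A. card {e \<in> A - B. x \<in> Y e} \<le> k) \<and>
        (\<forall>C. C \<subseteq> A - B \<longrightarrow> (B - (\<Union>e\<in>C. Y e)) \<union> C \<in> I)"
    using kex unfolding k_exchange_system_def by (elim conjE) assumption
  obtain Y where Y1': "\<forall>e\<in>Opt - S. Y e \<subseteq> S - Opt \<and> card (Y e) \<le> k"
    and Y2': "\<forall>x\<in>S - Opt. card {e \<in> Opt - S. x \<in> Y e} \<le> k"
    and Y3': "\<forall>C. C \<subseteq> Opt - S \<longrightarrow> (S - (\<Union>e\<in>C. Y e)) \<union> C \<in> I"
    using bspec[OF bspec[OF exall OI] SI] by blast
  have Y1: "\<And>e. e \<in> Opt - S \<Longrightarrow> Y e \<subseteq> S - Opt \<and> card (Y e) \<le> k" using Y1' by blast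
  have Y2: "\<And>x. x \<in> S - Opt \<Longrightarrow> card {e \<in> Opt - S. x \<in> Y e} \<le> k" using Y2' by blast
  have Y3: "\<And>C. C \<subseteq> Opt - S \<Longrightarrow> (S - (\<Union>e\<in>C. Y e)) \<union> C \<in> I" using Y3' by blast
  define w where "w = ww f \<alpha> S xs"
  define u where "u a = rnd \<alpha> (marg f (S \<union> {y\<in>D. before xs y a}) a)" for a
  have wnn: "\<And>x. x \<in> S \<Longrightarrow> 0 \<le> w x" unfolding w_def using ww_nonneg[OF ms al SG] SG by auto
  have marg_sup: "marg f (S \<union> {y\<in>D. before xs y x}) x \<le> marg f X x"
    if "X \<subseteq> S \<union> {y\<in>D. before xs y x}" "x \<in> D" for X x
    using that D_def DG SG before_asym[OF d, of x x]
    by (intro marg_antimono[OF ms]) auto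
  have unn: "\<And>a. a \<in> D \<Longrightarrow> 0 \<le> u a" unfolding u_def using DG SG
    by (intro rnd_nonneg[OF al] marg_nonneg[OF ms]) auto
  have loss_e: "\<And>B. B \<subseteq> S \<Longrightarrow> loss f \<alpha> S xs B = (\<Sum>x\<in>B. (w x)^2)"
    using loss_eq[OF d, of S] SG sx unfolding w_def by (simp add: Int_absorb1)
  have F3: "(\<Sum>x\<in>S. w x) \<le> f S - f {}"
  proof -
    define L where "L = filter (\<lambda>x. x \<in> S) xs"
    have sL: "set L = S" using SG sx L_def by auto
    have pL: "\<And>x. x \<in> S \<Longrightarrow> {} \<union> pre L x = {y\<in>S. before xs y x}"
      unfolding L_def pre_def by (auto simp: before_filter)
    have "(\<Sum>x\<in>S. w x) \<le> (\<Sum>x\<in>S. marg f {y\<in>S. before xs y x} x)"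
      unfolding w_def ww_def using SG
      by (intro sum_mono rnd_le[OF al] marg_nonneg[OF ms]) auto
    also have "\<dots> = (\<Sum>x\<in>set L. marg f ({} \<union> pre L x) x)" using pL sL by (intro sum.cong) auto
    also have "\<dots> = f S - f {}" using marg_telescope[of L f "{}"] L_def d sL by simp
    finally show ?thesis .
  qed
  have F4: "f (S \<union> D) - f S - real (card D) * \<alpha> \<le> (\<Sum>a\<in>D. u a)"
  proof -
    define L where "L = filter (\<lambda>x. x \<in> D) xs"
    have sL: "set L = D" using DG sx L_def by auto
    have pL: "\<And>x. x \<in> D \<Longrightarrow> S \<union> pre L x = S \<union> {y\<in>D. before xs y x}"
      unfolding L_def pre_def by (auto simp: before_filter)
    have "f (S \<union> D) - f S = (\<Sum>x\<in>set L. marg f (S \<union> pre L x) x)"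
      using marg_telescope[of L f S] L_def d sL by simp
    also have "\<dots> = (\<Sum>a\<in>D. marg f (S \<union> {y\<in>D. before xs y a}) a)" using pL sL by (intro sum.cong) auto
    also have "\<dots> \<le> (\<Sum>a\<in>D. u a + \<alpha>)"
    proof (rule sum_mono)
      fix a assume aD: "a \<in> D"
      show "marg f (S \<union> {y\<in>D. before xs y a}) a \<le> u a + \<alpha>"
      proof (cases "\<alpha> = 0")
        case True
        have "marg f (S \<union> {y\<in>D. before xs y a}) a \<le> f {a} - f {}"
          using aD DG SG D_def before_asym[OF d, of a a] by (intro marg_le_single[OF ms]) auto
        also have "\<dots> \<le> 0" using az[OF True] aD DG by auto
        finally show ?thesis using True unn[OF aD] by simp
      next
        case False
        then have "marg f (S \<union> {y\<in>D. before xs y a}) a - \<alpha> \<le> u a"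
          unfolding u_def by (intro rnd_ge) (use al in simp)
        then show ?thesis by linarith
      qed
    qed
    also have "\<dots> = (\<Sum>a\<in>D. u a) + real (card D) * \<alpha>" by (simp add: sum.distrib)
    finally show ?thesis by simp
  qed
  have noY: "u a \<le> 0" if aD: "a \<in> D" and Ya: "Y a = {}" for a
  proof -
    have kr: "k_replacement G I k S {a} {}"
    proof -
      have i: "(S - {}) \<union> {a} \<in> I" using Y3[of "{a}"] aD D_def Ya by simp
      show ?thesis unfolding k_replacement_def using aD D_def OG k1 i by auto
    qed
    have e: "{y\<in>{a}. before xs y a} = {}" using before_asym[OF d, of a a] by auto
    have g: "gain f \<alpha> S xs {a} {} = (\<Sum>a'\<in>{a}. (rnd \<alpha> (marg f ((S - {}) \<union> {y\<in>{a}. before xs y a'}) a'))^2)"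
      by (rule gain_eq[OF d]) (use aD DG sx in auto)
    have "gain f \<alpha> S xs {a} {} = (rnd \<alpha> (marg f S a))^2" using g e by (simp only: sum.insert sum.empty finite.emptyI empty_iff not_False_eq_True Diff_empty Un_empty_right add_0_right)
    moreover have "loss f \<alpha> S xs {} = 0" using loss_e[of "{}"] by simp
    ultimately have "(rnd \<alpha> (marg f S a))^2 \<le> 0" using lopt[OF kr] by simp
    then have z: "rnd \<alpha> (marg f S a) \<le> 0" by (simp add: power2_eq_square mult_le_0_iff) linarith
    have "u a \<le> rnd \<alpha> (marg f S a)" unfolding u_def
      by (intro rnd_mono[OF al] marg_sup aD) auto
    then show ?thesis using z by simp
  qed
  define D' where "D' = {a\<in>D. Y a \<noteq> {}}"
  have Yfin: "\<And>a. a \<in> D \<Longrightarrow> finite (Y a)" using Y1 finS D_def by (meson finite_Diff finite_subset)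
  have ex_c: "\<exists>c. c \<in> Y a \<and> (\<forall>x\<in>Y a. w x \<le> w c)" if "a \<in> D'" for a
  proof -
    have fa: "finite (w ` Y a)" "w ` Y a \<noteq> {}" using that Yfin D'_def by auto
    obtain c where "c \<in> Y a" "w c = Max (w ` Y a)" using Max_in[OF fa] by auto
    then show ?thesis using Max_ge[OF fa(1)] by auto
  qed
  define c where "c a = (SOME c. c \<in> Y a \<and> (\<forall>x\<in>Y a. w x \<le> w c))" for a
  have cY: "\<And>a. a \<in> D' \<Longrightarrow> c a \<in> Y a \<and> (\<forall>x\<in>Y a. w x \<le> w (c a))"
    unfolding c_def using ex_c by (rule someI_ex)
  have D'D: "D' \<subseteq> D" using D'_def by auto
  have finD': "finite D'" using finD D'D by (rule finite_subset[rotated])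
  have YSO: "\<And>a. a \<in> D \<Longrightarrow> Y a \<subseteq> S - Opt" using Y1 D_def by auto
  define Wf where "Wf a = (\<Sum>x\<in>Y a. w x)" for a
  have center: "2 * (\<Sum>a\<in>{a\<in>D'. c a = b}. u a) \<le> w b + (\<Sum>a\<in>{a\<in>D'. c a = b}. Wf a)"
    if bSO: "b \<in> S - Opt" for b
  proof -
    define T where "T = {a\<in>D'. c a = b}"
    define Bb where "Bb = (\<Union>a\<in>T. Y a)"
    have TD: "T \<subseteq> D" using T_def D'D by auto
    have finT: "finite T" using finD TD by (rule finite_subset[rotated])
    have bY: "\<And>a. a \<in> T \<Longrightarrow> b \<in> Y a" using cY T_def by auto
    have cardT: "card T \<le> k"
    proof -
      have "T \<subseteq> {e \<in> Opt - S. b \<in> Y e}" using bY TD D_def by auto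
      then have "card T \<le> card {e \<in> Opt - S. b \<in> Y e}" using finO by (intro card_mono) auto
      then show ?thesis using Y2[OF bSO] by simp
    qed
    have BbS: "Bb \<subseteq> S" using YSO TD Bb_def by auto
    have finBb: "finite Bb" using BbS finS by (rule finite_subset)
    have Bbsub: "Bb \<subseteq> insert b (\<Union>a\<in>T. Y a - {b})" unfolding Bb_def by auto
    have gen: "\<And>X y. finite X \<Longrightarrow> card (insert y X) \<le> Suc (card X)" by (simp add: card_insert_if)
    have gen2: "\<And>X y. finite X \<Longrightarrow> (\<Sum>x\<in>insert y X. (w x)^2) \<le> (w y)^2 + (\<Sum>x\<in>X. (w x)^2)"
      by (simp add: sum.insert_if)
    have fU: "finite (\<Union>a\<in>T. Y a - {b})" using finT Yfin TD by auto
    have cardBb: "card Bb \<le> k^2 - k + 1"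
    proof -
      have "card Bb \<le> card (insert b (\<Union>a\<in>T. Y a - {b}))"
        using Bbsub finT Yfin TD by (intro card_mono) auto
      also have "\<dots> \<le> Suc (card (\<Union>a\<in>T. Y a - {b}))" by (rule gen[OF fU])
      also have "card (\<Union>a\<in>T. Y a - {b}) \<le> (\<Sum>a\<in>T. card (Y a - {b}))" using finT by (rule card_UN_le)
      also have "\<dots> \<le> (\<Sum>a\<in>T. k - 1)"
      proof (rule sum_mono)
        fix a assume aT: "a \<in> T"
        have "card (Y a - {b}) = card (Y a) - 1" using bY[OF aT] Yfin TD aT by (simp add: card_Diff_singleton)
        moreover have "a \<in> Opt - S" using TD aT D_def by auto
        ultimately show "card (Y a - {b}) \<le> k - 1" using Y1[of a] by (simp add: diff_le_mono)
      qed
      also have "\<dots> = card T * (k - 1)" by simp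
      also have "\<dots> \<le> k * (k - 1)" using cardT by simp
      finally have "card Bb \<le> Suc (k * (k - 1))" by simp
      moreover have "k * (k - 1) = k^2 - k" by (simp add: power2_eq_square right_diff_distrib')
      ultimately show ?thesis by simp
    qed
    have kr: "k_replacement G I k S T Bb"
    proof -
      have i: "(S - Bb) \<union> T \<in> I" unfolding Bb_def by (rule Y3) (use TD D_def in auto)
      have "T \<subseteq> G - (S - Bb)" using TD DG D_def by auto
      then show ?thesis unfolding k_replacement_def using BbS cardT cardBb i by blast
    qed
    have gle: "gain f \<alpha> S xs T Bb \<le> (\<Sum>x\<in>Bb. (w x)^2)" using lopt[OF kr] loss_e[OF BbS] by simp
    have "(\<Sum>a\<in>T. (u a)^2) \<le> gain f \<alpha> S xs T Bb"
    proof -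
      have "gain f \<alpha> S xs T Bb = (\<Sum>a\<in>T. (rnd \<alpha> (marg f ((S - Bb) \<union> {y\<in>T. before xs y a}) a))^2)"
        using gain_eq[OF d, of T] TD DG sx by auto
      moreover have "(u a)^2 \<le> (rnd \<alpha> (marg f ((S - Bb) \<union> {y\<in>T. before xs y a}) a))^2" if aT: "a \<in> T" for a
      proof -
        have "u a \<le> rnd \<alpha> (marg f ((S - Bb) \<union> {y\<in>T. before xs y a}) a)"
          unfolding u_def using TD aT by (intro rnd_mono[OF al] marg_sup) auto
        then show ?thesis using unn TD aT by (intro power_mono) auto
      qed
      ultimately show ?thesis by (simp add: sum_mono)
    qed
    also have "\<dots> \<le> (\<Sum>x\<in>Bb. (w x)^2)" by (rule gle)
    also have "\<dots> \<le> (\<Sum>x\<in>insert b (\<Union>a\<in>T. Y a - {b}). (w x)^2)"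
      using Bbsub finT Yfin TD by (intro sum_mono2) auto
    also have "\<dots> \<le> (w b)^2 + (\<Sum>x\<in>(\<Union>a\<in>T. Y a - {b}). (w x)^2)"
      by (rule gen2[OF fU])
    also have "(\<Sum>x\<in>(\<Union>a\<in>T. Y a - {b}). (w x)^2) \<le> (\<Sum>a\<in>T. \<Sum>x\<in>Y a - {b}. (w x)^2)"
      using finT Yfin TD by (intro sum_UN_le_nonneg) auto
    also have "\<dots> \<le> (\<Sum>a\<in>T. w b * (Wf a - w b))"
    proof (rule sum_mono)
      fix a assume aT: "a \<in> T"
      have fY: "finite (Y a)" using Yfin TD aT by auto
      have "(\<Sum>x\<in>Y a - {b}. (w x)^2) \<le> (\<Sum>x\<in>Y a - {b}. w b * w x)"
      proof (rule sum_mono)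
        fix x assume x: "x \<in> Y a - {b}"
        have "x \<in> S" using x YSO TD aT by auto
        then have "0 \<le> w x" by (rule wnn)
        moreover have "w x \<le> w b" using cY[of a] aT T_def x by auto
        ultimately show "(w x)^2 \<le> w b * w x" by (simp add: power2_eq_square mult_right_mono)
      qed
      also have "\<dots> = w b * (Wf a - w b)"
        unfolding Wf_def using fY bY[OF aT] by (simp add: sum_distrib_left[symmetric] sum_diff1)
      finally show "(\<Sum>x\<in>Y a - {b}. (w x)^2) \<le> w b * (Wf a - w b)" .
    qed
    finally have Q: "(\<Sum>a\<in>T. (u a)^2) \<le> (w b)^2 + (\<Sum>a\<in>T. w b * (Wf a - w b))" by simp
    have "2 * (\<Sum>a\<in>T. u a) \<le> w b + (\<Sum>a\<in>T. Wf a)"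
    proof (rule per_center[OF finT _ _ _ Q])
      show "0 \<le> w b" using bSO wnn by auto
      show "\<And>a. a \<in> T \<Longrightarrow> 0 \<le> u a" using unn TD by auto
      show "\<And>a. a \<in> T \<Longrightarrow> 0 \<le> Wf a" unfolding Wf_def using wnn YSO TD by (force intro: sum_nonneg)
    qed
    then show ?thesis unfolding T_def .
  qed
  have cimg: "c ` D' \<subseteq> S - Opt" using cY YSO D'D by auto
  have finSO: "finite (S - Opt)" using finS by simp
  have sum_centers: "(\<Sum>b\<in>S - Opt. 2 * (\<Sum>a\<in>{a\<in>D'. c a = b}. u a))
      \<le> (\<Sum>b\<in>S - Opt. w b + (\<Sum>a\<in>{a\<in>D'. c a = b}. Wf a))"
    by (rule sum_mono) (rule center)
  have g1: "(\<Sum>b\<in>S - Opt. (\<Sum>a\<in>{a\<in>D'. c a = b}. u a)) = (\<Sum>a\<in>D'. u a)"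
    using sum.group[OF finD' finSO cimg, of u] by simp
  have g2: "(\<Sum>b\<in>S - Opt. (\<Sum>a\<in>{a\<in>D'. c a = b}. Wf a)) = (\<Sum>a\<in>D'. Wf a)"
    using sum.group[OF finD' finSO cimg, of Wf] by simp
  have key1: "2 * (\<Sum>a\<in>D'. u a) \<le> (\<Sum>b\<in>S - Opt. w b) + (\<Sum>a\<in>D'. Wf a)"
  proof -
    have e1: "(\<Sum>b\<in>S - Opt. w b + (\<Sum>a\<in>{a\<in>D'. c a = b}. Wf a)) = (\<Sum>b\<in>S - Opt. w b) + (\<Sum>a\<in>D'. Wf a)"
      using g2 by (simp only: sum.distrib)
    have e2: "(\<Sum>b\<in>S - Opt. 2 * (\<Sum>a\<in>{a\<in>D'. c a = b}. u a)) = 2 * (\<Sum>a\<in>D'. u a)"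
      using g1 by (simp only: sum_distrib_left[symmetric])
    show ?thesis using sum_centers e1 e2 by linarith
  qed
  have key2: "(\<Sum>a\<in>D'. Wf a) \<le> real k * (\<Sum>x\<in>S - Opt. w x)"
  proof -
    have "(\<Sum>a\<in>D'. Wf a) = (\<Sum>a\<in>D'. \<Sum>x\<in>{x\<in>S - Opt. x \<in> Y a}. w x)"
      unfolding Wf_def
    proof (rule sum.cong[OF refl])
      fix a assume "a \<in> D'"
      then have "Y a = {x\<in>S - Opt. x \<in> Y a}" using YSO D'D by blast
      then show "sum w (Y a) = (\<Sum>x\<in>{x\<in>S - Opt. x \<in> Y a}. w x)" by (rule arg_cong)
    qed
    also have "\<dots> = (\<Sum>x\<in>S - Opt. \<Sum>a\<in>{a\<in>D'. x \<in> Y a}. w x)"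
      by (rule sum.swap_restrict[OF finD' finSO])
    also have "\<dots> \<le> (\<Sum>x\<in>S - Opt. real k * w x)"
    proof (rule sum_mono)
      fix x assume x: "x \<in> S - Opt"
      have "card {a\<in>D'. x \<in> Y a} \<le> card {e \<in> Opt - S. x \<in> Y e}"
        using D'D D_def finO by (intro card_mono) auto
      then have "card {a\<in>D'. x \<in> Y a} \<le> k" using Y2[OF x] by simp
      moreover have "0 \<le> w x" using x wnn by auto
      ultimately show "(\<Sum>a\<in>{a\<in>D'. x \<in> Y a}. w x) \<le> real k * w x"
        by (simp add: mult_right_mono)
    qed
    also have "\<dots> = real k * (\<Sum>x\<in>S - Opt. w x)" by (simp add: sum_distrib_left)
    finally show ?thesis .
  qed
  have key3: "(\<Sum>x\<in>S - Opt. w x) \<le> (\<Sum>x\<in>S. w x)"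
    using finS wnn by (intro sum_mono2) auto
  have key4: "(\<Sum>a\<in>D. u a) \<le> (\<Sum>a\<in>D'. u a)"
  proof -
    have "(\<Sum>a\<in>D. u a) = (\<Sum>a\<in>D'. u a) + (\<Sum>a\<in>D - D'. u a)"
      using finD D'D by (metis add.commute sum.subset_diff)
    moreover have "(\<Sum>a\<in>D - D'. u a) \<le> 0"
      using noY D'_def by (intro sum_nonpos) auto
    ultimately show ?thesis by simp
  qed
  have sw0: "0 \<le> (\<Sum>x\<in>S - Opt. w x)" using wnn by (intro sum_nonneg) auto
  have F5: "2 * (\<Sum>a\<in>D. u a) \<le> (real k + 1) * (\<Sum>x\<in>S. w x)"
  proof -
    have "2 * (\<Sum>a\<in>D. u a) \<le> (real k + 1) * (\<Sum>x\<in>S - Opt. w x)"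
      using key1 key2 key4 by (simp add: algebra_simps)
    also have "\<dots> \<le> (real k + 1) * (\<Sum>x\<in>S. w x)" using key3 by (intro mult_left_mono) auto
    finally show ?thesis .
  qed
  have fO: "f Opt \<le> f (S \<union> D)"
  proof -
    have mono: "\<forall>X Y. X \<subseteq> Y \<and> Y \<subseteq> G \<longrightarrow> f X \<le> f Y"
      using ms unfolding monotone_submodular_def by (elim conjE) assumption
    have "Opt \<subseteq> S \<union> D" "S \<union> D \<subseteq> G" using D_def SG DG by auto
    then show ?thesis using mono by blast
  qed
  have cD: "real (card D) * \<alpha> \<le> real (card G) * \<alpha>"
    using card_mono[OF finG DG] al by (intro mult_right_mono) auto
  have sws: "(\<Sum>x\<in>S. w x) \<le> f S - f {}" by (rule F3)
  have "(real k + 1) * (\<Sum>x\<in>S. w x) \<le> (real k + 1) * (f S - f {})"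
    using sws by (intro mult_left_mono) auto
  then have A: "2 * (\<Sum>a\<in>D. u a) \<le> (real k + 1) * (f S - f {})" using F5 by linarith
  then have A2: "(\<Sum>a\<in>D. u a) \<le> (real k + 1) / 2 * (f S - f {})" by simp
  show ?thesis using A2 F4 fO cD by linarith
qed

lemma reorder_exists:
  assumes d: "distinct xs" and PA: "P \<inter> A = {}" and As: "A \<subseteq> set xs" and Ps: "P \<subseteq> set xs"
  shows "reorder_ok xs (filter (\<lambda>x. x \<in> P) xs @ filter (\<lambda>x. x \<notin> P) xs) P A"
proof -
  let ?L1 = "filter (\<lambda>x. x \<in> P) xs"
  let ?L2 = "filter (\<lambda>x. x \<notin> P) xs"
  have r1: "before (?L1 @ ?L2) x y" if "x \<in> P" "y \<in> A" for x y
  proof -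
    have "x \<in> set ?L1" using that Ps by auto
    moreover have "y \<in> set ?L2" using that As PA by auto
    ultimately show ?thesis unfolding before_append by blast
  qed
  have r2: "before (?L1 @ ?L2) x y \<longleftrightarrow> before xs x y" if "x \<in> P" "y \<in> P" for x y
  proof -
    have "y \<notin> set ?L2" using that by simp
    then have "\<not> before ?L2 x y" using before_set by fastforce
    then have "before (?L1 @ ?L2) x y \<longleftrightarrow> before ?L1 x y" unfolding before_append using \<open>y \<notin> set ?L2\<close> by blast
    also have "\<dots> \<longleftrightarrow> before xs x y" using that by (simp add: before_filter)
    finally show ?thesis .
  qed
  have r3: "before (?L1 @ ?L2) x y \<longleftrightarrow> before xs x y" if "x \<in> A" "y \<in> A" for x y
  proof -
    have xn: "x \<notin> P" "y \<notin> P" using that PA by auto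
    have "x \<notin> set ?L1" using xn by simp
    then have "\<not> before ?L1 x y" using before_set by fastforce
    then have "before (?L1 @ ?L2) x y \<longleftrightarrow> before ?L2 x y" unfolding before_append using \<open>x \<notin> set ?L1\<close> by blast
    also have "\<dots> \<longleftrightarrow> before xs x y" using xn by (simp add: before_filter)
    finally show ?thesis .
  qed
  have "distinct (?L1 @ ?L2)" using d by auto
  moreover have "set (?L1 @ ?L2) = set xs" by auto
  ultimately show ?thesis unfolding reorder_ok_def using r1 r2 r3 by blast
qed

lemma card_small_subsets:
  assumes "finite G" "card G \<ge> 1"
  shows "card {A. A \<subseteq> G \<and> card A \<le> j} \<le> (j + 1) * card G ^ j"
proof -
  have eq: "{A. A \<subseteq> G \<and> card A \<le> j} = (\<Union>i\<in>{..j}. {A. A \<subseteq> G \<and> card A = i})" by auto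
  have "card {A. A \<subseteq> G \<and> card A \<le> j} \<le> (\<Sum>i\<in>{..j}. card {A. A \<subseteq> G \<and> card A = i})"
    unfolding eq by (rule card_UN_le) simp
  also have "\<dots> = (\<Sum>i\<in>{..j}. card G choose i)" using n_subsets[OF assms(1)] by simp
  also have "\<dots> \<le> (\<Sum>i\<in>{..j}. card G ^ j)"
  proof (rule sum_mono)
    fix i assume "i \<in> {..j}"
    then have ij: "i \<le> j" by simp
    have "card G choose i \<le> card G ^ i"
      by (cases "i \<le> card G") (auto simp: binomial_le_pow binomial_eq_0)
    also have "\<dots> \<le> card G ^ j" using ij assms(2) by (simp add: power_increasing)
    finally show "card G choose i \<le> card G ^ j" .
  qed
  also have "\<dots> = (j + 1) * card G ^ j" by simp
  finally show ?thesis .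
qed

lemma nat_aux: "(a::nat) \<le> N \<Longrightarrow> 1 \<le> N \<Longrightarrow> a + a + 1 + Z * N \<le> (3 + Z) * N"
  by (simp add: algebra_simps)

lemma iter_cost_bound:
  assumes fin: "finite G" and n1: "card G \<ge> 1" and k1: "k \<ge> 1" and SG: "S \<subseteq> G"
  shows "iter_cost G k S \<le> (3 + (k + 1) * (k^2 - k + 2) * (2 * (k + (k^2 - k + 1) + 2))) * card G ^ (k^2 + 1)"
proof -
  let ?K = "k^2 - k + 1"
  let ?n = "card G"
  let ?c = "2 * (k + ?K + 2)"
  have sub: "candidates G k S \<subseteq> {A. A \<subseteq> G \<and> card A \<le> k} \<times> {B. B \<subseteq> G \<and> card B \<le> ?K}"
    unfolding candidates_def using SG by auto
  have finC: "finite ({A. A \<subseteq> G \<and> card A \<le> k} \<times> {B. B \<subseteq> G \<and> card B \<le> ?K})"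
    using fin by auto
  have finc: "finite (candidates G k S)" using finite_subset[OF sub finC] .
  have cc: "card (candidates G k S) \<le> ((k + 1) * ?n ^ k) * ((?K + 1) * ?n ^ ?K)"
  proof -
    have "card (candidates G k S) \<le> card ({A. A \<subseteq> G \<and> card A \<le> k} \<times> {B. B \<subseteq> G \<and> card B \<le> ?K})"
      by (rule card_mono[OF finC sub])
    also have "\<dots> = card {A. A \<subseteq> G \<and> card A \<le> k} * card {B. B \<subseteq> G \<and> card B \<le> ?K}"
      by (rule card_cartesian_product)
    also have "\<dots> \<le> ((k + 1) * ?n ^ k) * ((?K + 1) * ?n ^ ?K)"
      by (intro mult_le_mono card_small_subsets fin n1)
    finally show ?thesis .
  qed
  have ssum: "(\<Sum>(A, B)\<in>candidates G k S. 2 * (card A + card B + 2)) \<le> card (candidates G k S) * ?c"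
  proof -
    have "(\<Sum>(A, B)\<in>candidates G k S. 2 * (card A + card B + 2)) \<le> (\<Sum>p\<in>candidates G k S. ?c)"
      by (rule sum_mono) (auto simp: candidates_def)
    then show ?thesis by simp
  qed
  have kK: "k + ?K = k^2 + 1"
  proof -
    have "k \<le> k^2" using k1 by (simp add: power2_eq_square)
    then show ?thesis by simp
  qed
  have pw: "?n ^ k * ?n ^ ?K = ?n ^ (k^2 + 1)" by (metis power_add kK)
  have cS: "card S \<le> ?n" using card_mono[OF fin SG] .
  have n_le: "?n \<le> ?n ^ (k^2 + 1)" using n1 by (simp add: self_le_power)
  have one_le: "1 \<le> ?n ^ (k^2 + 1)" using n1 by simp
  have "iter_cost G k S \<le> ?n + ?n + 1 + ((k + 1) * ?n ^ k) * ((?K + 1) * ?n ^ ?K) * ?c"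
    unfolding iter_cost_def using cS ssum cc by (meson add_le_mono le_refl mult_le_mono1 order_trans)
  also have "((k + 1) * ?n ^ k) * ((?K + 1) * ?n ^ ?K) * ?c = ((k + 1) * (?K + 1) * ?c) * (?n ^ k * ?n ^ ?K)"
    by (simp only: mult_ac)
  also have "\<dots> = ((k + 1) * (?K + 1) * ?c) * ?n ^ (k^2 + 1)" by (simp only: pw)
  also have "?K + 1 = k^2 - k + 2" by simp
  finally have "iter_cost G k S \<le> ?n + ?n + 1 + ((k + 1) * (k^2 - k + 2) * ?c) * ?n ^ (k^2 + 1)" .
  also have "\<dots> \<le> (3 + (k + 1) * (k^2 - k + 2) * ?c) * ?n ^ (k^2 + 1)"
    using n_le one_le by (rule nat_aux)
  finally show ?thesis .
qed

lemma run_inv: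
  assumes ms: "monotone_submodular G f" and IG: "I \<subseteq> Pow G" and al: "0 \<le> \<alpha>"
    and S0: "fst (s 0) \<in> I" and d0: "distinct (snd (s 0))" and x0: "set (snd (s 0)) = G"
    and steps: "\<forall>i<m. ls_step G I f k \<alpha> (s i) (s (Suc i))"
  shows "i \<le> m \<Longrightarrow> fst (s i) \<in> I \<and> distinct (snd (s i)) \<and> set (snd (s i)) = G \<and>
     loss f \<alpha> (fst (s 0)) (snd (s 0)) (fst (s 0)) + real i * \<alpha>^2 \<le> loss f \<alpha> (fst (s i)) (snd (s i)) (fst (s i))"
proof (induction i)
  case 0
  then show ?case using S0 d0 x0 by simp
next
  case (Suc i)
  then have IH: "fst (s i) \<in> I \<and> distinct (snd (s i)) \<and> set (snd (s i)) = G \<and>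
     loss f \<alpha> (fst (s 0)) (snd (s 0)) (fst (s 0)) + real i * \<alpha>^2 \<le> loss f \<alpha> (fst (s i)) (snd (s i)) (fst (s i))"
    by simp
  have st: "ls_step G I f k \<alpha> (fst (s i), snd (s i)) (fst (s (Suc i)), snd (s (Suc i)))"
    using steps Suc.prems by simp
  have "fst (s (Suc i)) \<in> I \<and> distinct (snd (s (Suc i))) \<and> set (snd (s (Suc i))) = G \<and> 0 < \<alpha> \<and>
         loss f \<alpha> (fst (s i)) (snd (s i)) (fst (s i)) + \<alpha>^2 \<le> loss f \<alpha> (fst (s (Suc i))) (snd (s (Suc i))) (fst (s (Suc i)))"
    using step_pot[OF ms al _ IG _ _ st] IH by blast
  then show ?case using IH by (simp add: algebra_simps)
qed

lemma pot_bound: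
  assumes ms: "monotone_submodular G f" and al: "0 \<le> \<alpha>" and SG: "S \<subseteq> G" and fin: "finite G"
    and d: "distinct xs" and sx: "set xs = G" and mx: "\<forall>e\<in>G. f {e} \<le> f0"
  shows "0 \<le> loss f \<alpha> S xs S \<and> loss f \<alpha> S xs S \<le> real (card G) * f0^2"
proof -
  have le: "loss f \<alpha> S xs S = (\<Sum>x\<in>S. (ww f \<alpha> S xs x)^2)" using loss_eq[OF d, of S] SG sx by simp
  have fe: "0 \<le> f {}" using ms unfolding monotone_submodular_def by blast
  have b: "(ww f \<alpha> S xs x)^2 \<le> f0^2" if x: "x \<in> S" for x
  proof -
    have "0 \<le> ww f \<alpha> S xs x" using ww_nonneg[OF ms al SG] x SG by auto
    moreover have "ww f \<alpha> S xs x \<le> f0" using ww_le[OF ms al SG x d] mx x SG fe by force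
    ultimately show ?thesis by (simp add: power_mono)
  qed
  have finS: "finite S" using SG fin by (rule finite_subset)
  have "(\<Sum>x\<in>S. (ww f \<alpha> S xs x)^2) \<le> real (card S) * f0^2"
    using sum_bounded_above[of S "\<lambda>x. (ww f \<alpha> S xs x)^2" "f0^2"] b by simp
  also have "\<dots> \<le> real (card G) * f0^2" using card_mono[OF fin SG] by (intro mult_right_mono) auto
  finally show ?thesis using le by (simp add: sum_nonneg)
qed

theorem mainTheorem6:
  fixes k :: nat
  assumes "k \<ge> 1"
  shows "\<exists>C>0. \<forall>(G :: 'a set) I f \<epsilon> e0 xs0 (s :: nat \<Rightarrow> 'a set \<times> 'a list) m.
     0 < \<epsilon> \<and> \<epsilon> < 1 \<and> finite G \<and> k_exchange_system G I k \<and>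
     (\<forall>e\<in>G. {e} \<in> I) \<and> monotone_submodular G f \<and>
     e0 \<in> G \<and> (\<forall>e\<in>G. f {e} \<le> f {e0}) \<and> is_order G xs0 \<and>
     s 0 = ({e0}, xs0) \<and>
     (\<forall>i<m. ls_step G I f k (ls_alpha G f k \<epsilon> e0) (s i) (s (Suc i)))
     \<longrightarrow>
       real (card G) + (\<Sum>i\<le>m. real (iter_cost G k (fst (s i))))
          \<le> C * real k ^ 2 * real (card G) ^ (k ^ 2 + 4) / \<epsilon> ^ 2
     \<and> ((\<nexists>t. ls_step G I f k (ls_alpha G f k \<epsilon> e0) (s m) t) \<longrightarrow>
          fst (s m) \<in> I \<and>
          (\<forall>Opt\<in>I. f Opt \<le> ((real k + 3) / 2 + \<epsilon>) * f (fst (s m))))"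
proof -
  have k1: "k \<ge> 1" by (rule assms)
  define Kc :: nat where "Kc = 3 + (k + 1) * (k^2 - k + 2) * (2 * (k + (k^2 - k + 1) + 2))"
  define C :: real where "C = 1 + real Kc + real Kc * (real k + 5)^2"
  have Cpos: "C > 0" unfolding C_def by (simp add: add_pos_nonneg)
  show ?thesis
  proof (rule exI[of _ C], rule conjI[OF Cpos], intro allI impI, rule conjI, rule_tac [2] impI)
    fix G :: "'a set" and I f \<epsilon> e0 xs0 and s :: "nat \<Rightarrow> 'a set \<times> 'a list" and m
    assume H: "0 < \<epsilon> \<and> \<epsilon> < 1 \<and> finite G \<and> k_exchange_system G I k \<and>
     (\<forall>e\<in>G. {e} \<in> I) \<and> monotone_submodular G f \<and>
     e0 \<in> G \<and> (\<forall>e\<in>G. f {e} \<le> f {e0}) \<and> is_order G xs0 \<and>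
     s 0 = ({e0}, xs0) \<and>
     (\<forall>i<m. ls_step G I f k (ls_alpha G f k \<epsilon> e0) (s i) (s (Suc i)))"
    then have ep: "0 < \<epsilon>" "\<epsilon> < 1" and fin: "finite G" and kex: "k_exchange_system G I k"
      and sing: "\<forall>e\<in>G. {e} \<in> I" and ms: "monotone_submodular G f" and e0G: "e0 \<in> G"
      and mx: "\<forall>e\<in>G. f {e} \<le> f {e0}" and ord: "is_order G xs0" and s0: "s 0 = ({e0}, xs0)"
      and steps: "\<forall>i<m. ls_step G I f k (ls_alpha G f k \<epsilon> e0) (s i) (s (Suc i))"
      by auto
    define n where "n = card G"
    define \<delta> where "\<delta> = ls_delta k \<epsilon>"
    define \<alpha> where "\<alpha> = ls_alpha G f k \<epsilon> e0"
    define f0 where "f0 = f {e0}"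
    have n1: "n \<ge> 1"
    proof -
      have "G \<noteq> {}" using e0G by auto
      then have "0 < card G" using fin by (simp add: card_gt_0_iff)
      then show ?thesis unfolding n_def by simp
    qed
    have nr: "real n \<ge> 1" using n1 by simp
    define q where "q = (real k + 3) / (2 * \<epsilon>)"
    have qpos: "q > 0" unfolding q_def using ep by simp
    have \<delta>q: "\<delta> = 1 / (1 + q)" unfolding \<delta>_def ls_delta_def q_def by simp
    have \<delta>pos: "\<delta> > 0" using \<delta>q qpos by simp
    have fnn0: "\<forall>X. X \<subseteq> G \<longrightarrow> f X \<ge> 0" using ms unfolding monotone_submodular_def by (elim conjE) assumption
    have fnn: "\<And>X. X \<subseteq> G \<Longrightarrow> 0 \<le> f X" using fnn0 by blast
    have f0nn: "0 \<le> f0" unfolding f0_def using fnn e0G by simp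
    have fe: "0 \<le> f {}" using fnn by simp
    have \<alpha>def: "\<alpha> = f0 * \<delta> / real n" unfolding \<alpha>_def ls_alpha_def f0_def \<delta>_def n_def by simp
    have al: "0 \<le> \<alpha>" unfolding \<alpha>def using f0nn \<delta>pos by simp
    have IG: "I \<subseteq> Pow G" using kex unfolding k_exchange_system_def by (elim conjE) assumption
    have d0: "distinct xs0" and x0: "set xs0 = G" using ord unfolding is_order_def by auto
    have e0I: "{e0} \<in> I" using sing e0G by simp
    have inv: "\<And>i. i \<le> m \<Longrightarrow> fst (s i) \<in> I \<and> distinct (snd (s i)) \<and> set (snd (s i)) = G \<and>
       loss f \<alpha> (fst (s 0)) (snd (s 0)) (fst (s 0)) + real i * \<alpha>^2 \<le> loss f \<alpha> (fst (s i)) (snd (s i)) (fst (s i))"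
      by (rule run_inv[OF ms IG al]) (use s0 e0I d0 x0 steps \<alpha>_def in auto)
    have SmG: "fst (s i) \<subseteq> G" if "i \<le> m" for i using inv[OF that] IG by auto
    have mx': "\<forall>e\<in>G. f {e} \<le> f0" using mx f0_def by simp
    have mb: "real m * \<epsilon>^2 \<le> real n ^ 3 * (real k + 5)^2"
    proof (cases "m = 0")
      case True then show ?thesis by simp
    next
      case False
      have st0: "ls_step G I f k \<alpha> (fst (s 0), snd (s 0)) (fst (s (Suc 0)), snd (s (Suc 0)))"
        using steps False \<alpha>_def by simp
      have apos: "0 < \<alpha>"
        using step_pot[OF ms al _ IG _ _ st0] s0 e0I d0 x0 by simp
      have f0pos: "0 < f0"
      proof (rule ccontr)
        assume "\<not> 0 < f0"
        then have "f0 = 0" using f0nn by simp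
        then show False using apos unfolding \<alpha>def by simp
      qed
      have p0: "0 \<le> loss f \<alpha> (fst (s 0)) (snd (s 0)) (fst (s 0))"
        using pot_bound[OF ms al _ fin _ _ mx'] s0 e0G d0 x0 by simp
      have im: "fst (s m) \<in> I \<and> distinct (snd (s m)) \<and> set (snd (s m)) = G" using inv[of m] by simp
      have pm: "loss f \<alpha> (fst (s m)) (snd (s m)) (fst (s m)) \<le> real n * f0^2"
        using pot_bound[OF ms al SmG[of m] fin _ _ mx'] im n_def by simp
      have "real m * \<alpha>^2 \<le> real n * f0^2" using inv[of m] p0 pm by simp
      then have "real m * (f0 * \<delta> / real n)^2 \<le> real n * f0^2" unfolding \<alpha>def .
      then have "real m * \<delta>^2 * f0^2 \<le> real n ^ 3 * f0^2" using nr
        by (simp add: power_divide power_mult_distrib field_simps power2_eq_square power3_eq_cube)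
      then have m\<delta>: "real m * \<delta>^2 \<le> real n ^ 3" using f0pos by simp
      have "1 + q \<le> (real k + 5) / \<epsilon>"
      proof -
        have "\<epsilon> * (1 + q) = \<epsilon> + (real k + 3) / 2" unfolding q_def using ep by (simp add: field_simps)
        also have "\<dots> \<le> real k + 5" using ep by (simp add: field_simps)
        finally show ?thesis using ep by (simp add: field_simps mult.commute)
      qed
      then have "\<epsilon> / (real k + 5) \<le> \<delta>" unfolding \<delta>q using ep qpos
        by (simp add: field_simps)
      then have "(\<epsilon> / (real k + 5))^2 \<le> \<delta>^2" using ep by (intro power_mono) auto
      then have "real m * (\<epsilon> / (real k + 5))^2 \<le> real m * \<delta>^2" by (intro mult_left_mono) auto
      then have "real m * (\<epsilon> / (real k + 5))^2 \<le> real n ^ 3" using m\<delta> by linarith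
      then show ?thesis by (simp add: power_divide field_simps)
    qed
    define N1 where "N1 = real n ^ (k^2 + 1)"
    define N4 where "N4 = real n ^ (k^2 + 4)"
    have N4eq: "N4 = real n ^ 3 * N1"
    proof -
      have "k^2 + 4 = 3 + (k^2 + 1)" by simp
      then show ?thesis unfolding N4_def N1_def by (simp only: power_add)
    qed
    have N1ge: "1 \<le> N1" unfolding N1_def by (rule one_le_power[OF nr])
    have nN4: "real n \<le> N4"
    proof -
      have "real n ^ 1 \<le> real n ^ (k^2 + 4)" by (rule power_increasing) (use nr in auto)
      then show ?thesis unfolding N4_def by simp
    qed
    have N1N4: "N1 \<le> N4" unfolding N4eq using N1ge nr by (simp add: mult_le_cancel_right1)
    have ic: "real (iter_cost G k (fst (s i))) \<le> real Kc * N1" if "i \<le> m" for i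
    proof -
      have "iter_cost G k (fst (s i)) \<le> Kc * n ^ (k^2 + 1)"
        unfolding Kc_def n_def using iter_cost_bound[OF fin _ k1 SmG[OF that]] n1 n_def by simp
      then have "real (iter_cost G k (fst (s i))) \<le> real (Kc * n ^ (k^2 + 1))" by linarith
      then show ?thesis unfolding N1_def by simp
    qed
    have sumc: "(\<Sum>i\<le>m. real (iter_cost G k (fst (s i)))) \<le> (real m + 1) * (real Kc * N1)"
    proof -
      have "(\<Sum>i\<le>m. real (iter_cost G k (fst (s i)))) \<le> (\<Sum>i\<le>m. real Kc * N1)"
        by (rule sum_mono) (use ic in simp)
      then show ?thesis by (simp add: add.commute)
    qed
    have e2: "\<epsilon>^2 \<le> 1" using ep by (simp add: power_le_one)
    have e2pos: "0 < \<epsilon>^2" using ep by simp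
    have kk: "1 \<le> real k ^ 2" using k1 by simp
    have Kcnn: "0 \<le> real Kc" by simp
    have mN: "real m * real Kc * N1 * \<epsilon>^2 \<le> real Kc * (real k + 5)^2 * N4"
    proof -
      have "real m * \<epsilon>^2 * (real Kc * N1) \<le> real n ^ 3 * (real k + 5)^2 * (real Kc * N1)"
        using mb N1ge by (intro mult_right_mono) auto
      then show ?thesis unfolding N4eq by (simp add: algebra_simps)
    qed
    have costA: "(real n + (\<Sum>i\<le>m. real (iter_cost G k (fst (s i))))) * \<epsilon>^2 \<le> C * N4"
    proof -
      have "(real n + (\<Sum>i\<le>m. real (iter_cost G k (fst (s i))))) * \<epsilon>^2
            \<le> (real n + (real m + 1) * (real Kc * N1)) * \<epsilon>^2"
        using sumc e2pos by (intro mult_right_mono) auto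
      also have "\<dots> = real n * \<epsilon>^2 + real Kc * N1 * \<epsilon>^2 + real m * real Kc * N1 * \<epsilon>^2"
        by (simp add: algebra_simps)
      also have "\<dots> \<le> N4 + real Kc * N4 + real Kc * (real k + 5)^2 * N4"
      proof -
        have "real n * \<epsilon>^2 \<le> real n * 1" using e2 nr by (intro mult_left_mono) auto
        then have a: "real n * \<epsilon>^2 \<le> N4" using nN4 by linarith
        have b: "real Kc * N1 * \<epsilon>^2 \<le> real Kc * N4"
        proof -
          have "N1 * \<epsilon>^2 \<le> N1 * 1" using e2 N1ge by (intro mult_left_mono) auto
          then have "N1 * \<epsilon>^2 \<le> N4" using N1N4 by linarith
          then show ?thesis using Kcnn by (simp add: mult.assoc mult_left_mono)
        qed
        show ?thesis using a b mN by linarith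
      qed
      also have "\<dots> = C * N4" unfolding C_def by (simp add: algebra_simps)
      finally show ?thesis .
    qed
    have N4nn: "0 \<le> N4" unfolding N4_def by simp
    have "C * (1 * N4) \<le> C * (real k ^ 2 * N4)"
      using mult_right_mono[OF kk N4nn] Cpos by (intro mult_left_mono) auto
    then have "C * N4 \<le> C * real k ^ 2 * N4" by (simp add: mult.assoc)
    then have "(real n + (\<Sum>i\<le>m. real (iter_cost G k (fst (s i))))) * \<epsilon>^2 \<le> C * real k ^ 2 * N4"
      using costA by linarith
    then show "real (card G) + (\<Sum>i\<le>m. real (iter_cost G k (fst (s i))))
          \<le> C * real k ^ 2 * real (card G) ^ (k ^ 2 + 4) / \<epsilon> ^ 2"
      unfolding N4_def n_def using e2pos by (simp add: pos_le_divide_eq)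
  next
    fix G :: "'a set" and I f \<epsilon> e0 xs0 and s :: "nat \<Rightarrow> 'a set \<times> 'a list" and m
    assume H: "0 < \<epsilon> \<and> \<epsilon> < 1 \<and> finite G \<and> k_exchange_system G I k \<and>
     (\<forall>e\<in>G. {e} \<in> I) \<and> monotone_submodular G f \<and>
     e0 \<in> G \<and> (\<forall>e\<in>G. f {e} \<le> f {e0}) \<and> is_order G xs0 \<and>
     s 0 = ({e0}, xs0) \<and>
     (\<forall>i<m. ls_step G I f k (ls_alpha G f k \<epsilon> e0) (s i) (s (Suc i)))"
    and nost: "\<nexists>t. ls_step G I f k (ls_alpha G f k \<epsilon> e0) (s m) t"
    then have ep: "0 < \<epsilon>" "\<epsilon> < 1" and fin: "finite G" and kex: "k_exchange_system G I k"
      and sing: "\<forall>e\<in>G. {e} \<in> I" and ms: "monotone_submodular G f" and e0G: "e0 \<in> G"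
      and mx: "\<forall>e\<in>G. f {e} \<le> f {e0}" and ord: "is_order G xs0" and s0: "s 0 = ({e0}, xs0)"
      and steps: "\<forall>i<m. ls_step G I f k (ls_alpha G f k \<epsilon> e0) (s i) (s (Suc i))"
      by auto
    define n where "n = card G"
    define \<delta> where "\<delta> = ls_delta k \<epsilon>"
    define \<alpha> where "\<alpha> = ls_alpha G f k \<epsilon> e0"
    define f0 where "f0 = f {e0}"
    have n1: "n \<ge> 1"
    proof -
      have "G \<noteq> {}" using e0G by auto
      then have "0 < card G" using fin by (simp add: card_gt_0_iff)
      then show ?thesis unfolding n_def by simp
    qed
    have nr: "real n \<ge> 1" using n1 by simp
    define q where "q = (real k + 3) / (2 * \<epsilon>)"
    have qpos: "q > 0" unfolding q_def using ep by simp
    have \<delta>q: "\<delta> = 1 / (1 + q)" unfolding \<delta>_def ls_delta_def q_def by simp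
    have \<delta>pos: "\<delta> > 0" using \<delta>q qpos by simp
    have fnn0: "\<forall>X. X \<subseteq> G \<longrightarrow> f X \<ge> 0" using ms unfolding monotone_submodular_def by (elim conjE) assumption
    have fnn: "\<And>X. X \<subseteq> G \<Longrightarrow> 0 \<le> f X" using fnn0 by blast
    have f0nn: "0 \<le> f0" unfolding f0_def using fnn e0G by simp
    have fe: "0 \<le> f {}" using fnn by simp
    have \<alpha>def: "\<alpha> = f0 * \<delta> / real n" unfolding \<alpha>_def ls_alpha_def f0_def \<delta>_def n_def by simp
    have al: "0 \<le> \<alpha>" unfolding \<alpha>def using f0nn \<delta>pos by simp
    have IG: "I \<subseteq> Pow G" using kex unfolding k_exchange_system_def by (elim conjE) assumption
    have d0: "distinct xs0" and x0: "set xs0 = G" using ord unfolding is_order_def by auto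
    have e0I: "{e0} \<in> I" using sing e0G by simp
    have im: "fst (s m) \<in> I \<and> distinct (snd (s m)) \<and> set (snd (s m)) = G"
      using run_inv[OF ms IG al, of s m k, of m] s0 e0I d0 x0 steps \<alpha>_def by auto
    define S where "S = fst (s m)"
    define xs where "xs = snd (s m)"
    have SI: "S \<in> I" and d: "distinct xs" and sx: "set xs = G" using im S_def xs_def by auto
    have SG: "S \<subseteq> G" using SI IG by auto
    have lopt: "gain f \<alpha> S xs A B \<le> loss f \<alpha> S xs B" if kr: "k_replacement G I k S A B" for A B
    proof (rule ccontr)
      assume "\<not> gain f \<alpha> S xs A B \<le> loss f \<alpha> S xs B"
      then have gl: "gain f \<alpha> S xs A B > loss f \<alpha> S xs B" by simp
      have AG: "A \<subseteq> G - (S - B)" using kr unfolding k_replacement_def by blast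
      define xs' where "xs' = filter (\<lambda>x. x \<in> S - B) xs @ filter (\<lambda>x. x \<notin> S - B) xs"
      have ro: "reorder_ok xs xs' (S - B) A"
        unfolding xs'_def by (rule reorder_exists[OF d]) (use AG SG sx in auto)
      have "ls_step G I f k \<alpha> (s m) ((S - B) \<union> A, xs')"
        unfolding ls_step_def using kr gl ro S_def xs_def by auto
      then show False using nost \<alpha>_def by blast
    qed
    have az: "\<alpha> = 0 \<Longrightarrow> (\<forall>e\<in>G. f {e} \<le> f {})"
    proof -
      assume "\<alpha> = 0"
      then have "f0 = 0" unfolding \<alpha>def using \<delta>pos nr by simp
      then show ?thesis using mx fe f0_def by force
    qed
    have nal: "real n * \<alpha> = \<delta> * f0" unfolding \<alpha>def using nr by simp
    have bound: "f Opt \<le> (real k + 3) / 2 * f S + \<delta> * f0" if OI: "Opt \<in> I" for Opt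
    proof -
      have "f Opt \<le> f S + (real k + 1) / 2 * (f S - f {}) + real (card G) * \<alpha>"
        by (rule approx_local[OF k1 kex ms al SI d sx lopt OI az])
      moreover have "(real k + 1) / 2 * (f S - f {}) \<le> (real k + 1) / 2 * f S"
        using fe by (intro mult_left_mono) auto
      ultimately show ?thesis using nal n_def by (simp add: field_simps)
    qed
    have "f0 \<le> (real k + 3) / 2 * f S + \<delta> * f0" using bound[OF e0I] f0_def by simp
    moreover have "f0 * (1 - \<delta>) = f0 - \<delta> * f0" by (simp add: algebra_simps)
    ultimately have "f0 * (1 - \<delta>) \<le> (real k + 3) / 2 * f S" by linarith
    moreover have "1 - \<delta> = q * \<delta>" unfolding \<delta>q using qpos by (simp add: field_simps)
    moreover have "(real k + 3) / 2 = q * \<epsilon>" unfolding q_def using ep by simp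
    ultimately have "q * (\<delta> * f0) \<le> q * (\<epsilon> * f S)" by (simp add: algebra_simps)
    then have key: "\<delta> * f0 \<le> \<epsilon> * f S" using qpos by simp
    show "fst (s m) \<in> I \<and> (\<forall>Opt\<in>I. f Opt \<le> ((real k + 3) / 2 + \<epsilon>) * f (fst (s m)))"
    proof (intro conjI ballI)
      show "fst (s m) \<in> I" using SI S_def by simp
      fix Opt assume "Opt \<in> I"
      then have b: "f Opt \<le> (real k + 3) / 2 * f S + \<delta> * f0" by (rule bound)
      have "((real k + 3) / 2 + \<epsilon>) * f S = (real k + 3) / 2 * f S + \<epsilon> * f S"
        by (simp add: algebra_simps)
      then show "f Opt \<le> ((real k + 3) / 2 + \<epsilon>) * f (fst (s m))"
        using b key unfolding S_def by linarith
    qed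
  qed
qed

end
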